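(* Let $\kappa$ be a regular infinite cardinal. If a Boolean algebra $B$ has the $\kappa$-FN, then $c(B)\le 2^{<\kappa}$ and $\mathrm{Length}(B)\le 2^{<\kappa}$.
   Context: For an infinite cardinal $\kappa$, a Boolean algebra $B$ has the $\kappa$-Freese–Nation property ($\kappa$-FN) if there is a map $f:B\to[B]^{<\kappa}$ such that for all $a,b\in B$ with $a\le b$ there is $c\in f(a)\cap f(b)$ with $a\le c\le b$. $c(B)$ (cellularity) is the supremum of cardinalities of sets of pairwise disjoint nonzero elements of $B$; $\mathrm{Length}(B)$ is the supremum of cardinalities of subsets of $B$ linearly ordered by the Boolean order. *)

theory Defs
  imports Main
begin

definition FN_property :: "'k rel \<Rightarrow> ('a::boolean_algebra) itself \<Rightarrow> bool" where
  "FN_property \<kappa> _ \<longleftrightarrow> (\<exists>f :: 'a \<Rightarrow> 'a set.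
      (\<forall>a. (card_of (f a), \<kappa>) \<in> ordLess) \<and>
      (\<forall>a b. a \<le> b \<longrightarrow> (\<exists>c \<in> f a \<inter> f b. a \<le> c \<and> c \<le> b)))"

definition pairwise_disjoint_nonzero :: "('a::boolean_algebra) set \<Rightarrow> bool" where
  "pairwise_disjoint_nonzero A \<longleftrightarrow>
     (\<forall>x\<in>A. x \<noteq> bot) \<and> (\<forall>x\<in>A. \<forall>y\<in>A. x \<noteq> y \<longrightarrow> inf x y = bot)"

definition is_chain :: "('a::order) set \<Rightarrow> bool" where
  "is_chain C \<longleftrightarrow> (\<forall>x\<in>C. \<forall>y\<in>C. x \<le> y \<or> y \<le> x)"

text \<open>The set \<open>2^{<\<kappa>}\<close>: all 0/1-sequences of length \<open>\<alpha> < \<kappa>\<close>, represented as subsets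
  of proper initial segments of \<kappa>; its cardinality is \<open>2^{<\<kappa>}\<close>.\<close>
definition two_lt :: "'k rel \<Rightarrow> ('k \<times> 'k set) set" where
  "two_lt \<kappa> = {(a, A). a \<in> Field \<kappa> \<and> A \<subseteq> underS \<kappa> a}"

end

theory Submission
  imports Defs
begin
unbundle cardinal_syntax

locale tsetup =
  fixes \<kappa> :: "'k rel" and X :: "'a set" and T :: "'a \<Rightarrow> 'q set" and h :: "'q \<Rightarrow> 'a \<Rightarrow> bool"
  assumes CO: "Card_order \<kappa>" and INF: "infinite (Field \<kappa>)" and REG: "regularCard \<kappa>"
    and Tsmall: "\<And>r. r \<in> X \<Longrightarrow> |T r| <o \<kappa>"
    and SEP: "\<And>x r. x \<in> X \<Longrightarrow> r \<in> X \<Longrightarrow> x \<noteq> r \<Longrightarrow> \<exists>q\<in>T r \<inter> T x. h q x \<noteq> h q r"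
begin
unbundle cardinal_syntax

definition "R = \<kappa> - Id"

definition bit :: "'q + 'a \<Rightarrow> 'a \<Rightarrow> bool" where
  "bit e z = (case e of Inl q \<Rightarrow> h q z | Inr _ \<Rightarrow> False)"

definition placed :: "('k \<Rightarrow> 'q + 'a) \<Rightarrow> 'k \<Rightarrow> 'q set" where
  "placed g i = {q. \<exists>j. (j,i) \<in> R \<and> g j = Inl q}"

definition reps :: "('k \<Rightarrow> 'q + 'a) \<Rightarrow> 'k \<Rightarrow> 'a set" where
  "reps g i = {r. \<exists>j. (j,i) \<in> R \<and> g j = Inr r}"

definition pend :: "('k \<Rightarrow> 'q + 'a) \<Rightarrow> 'k \<Rightarrow> 'q set" where
  "pend g i = (\<Union>r\<in>reps g i. T r) - placed g i"

definition F :: "'a \<Rightarrow> ('k \<Rightarrow> 'q + 'a) \<Rightarrow> 'k \<Rightarrow> 'q + 'a" where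
  "F x g i = (if pend g i = {} then Inr (SOME y. y \<in> X \<and> (\<forall>j. (j,i) \<in> R \<longrightarrow> bit (g j) y = bit (g j) x))
              else Inl (SOME q. q \<in> pend g i))"

definition E :: "'a \<Rightarrow> 'k \<Rightarrow> 'q + 'a" where
  "E x = wfrec R (F x)"

lemma WO: "Well_order \<kappa>"
  using CO card_order_on_well_order_on by blast

lemma wfR: "wf R"
  using WO unfolding R_def well_order_on_def by blast

lemma transK: "trans \<kappa>" and antisymK: "antisym \<kappa>" and totalK: "total_on (Field \<kappa>) \<kappa>"
  using WO unfolding well_order_on_def linear_order_on_def partial_order_on_def preorder_on_def by blast+

lemma reflK: "b \<in> Field \<kappa> \<Longrightarrow> (b,b) \<in> \<kappa>"
  using WO unfolding well_order_on_def linear_order_on_def partial_order_on_def preorder_on_def refl_on_def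
  by blast

lemma R_trans: "(a,b) \<in> R \<Longrightarrow> (b,c) \<in> R \<Longrightarrow> (a,c) \<in> R"
  using transK antisymK unfolding R_def trans_def antisym_def by blast

lemma R_field: "(a,b) \<in> R \<Longrightarrow> a \<in> Field \<kappa> \<and> b \<in> Field \<kappa>"
  unfolding R_def Field_def by blast

lemma R_total: "a \<in> Field \<kappa> \<Longrightarrow> b \<in> Field \<kappa> \<Longrightarrow> a \<noteq> b \<Longrightarrow> (a,b) \<in> R \<or> (b,a) \<in> R"
  using totalK unfolding R_def total_on_def by blast

lemma F_cong:
  assumes "\<And>j. (j,i) \<in> R \<Longrightarrow> f j = g j"
  shows "F x f i = F x g i"
proof -
  have 1: "placed f i = placed g i" "reps f i = reps g i"
    using assms unfolding placed_def reps_def by (metis)+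
  have 2: "pend f i = pend g i" unfolding pend_def 1 ..
  have 3: "(\<forall>j. (j,i) \<in> R \<longrightarrow> bit (f j) y = bit (f j) x) = (\<forall>j. (j,i) \<in> R \<longrightarrow> bit (g j) y = bit (g j) x)" for y
    using assms by auto
  show ?thesis unfolding F_def 2 3 ..
qed

lemma E_unfold: "E x i = F x (E x) i"
proof -
  have "adm_wf R (F x)" unfolding adm_wf_def using F_cong by blast
  then show ?thesis unfolding E_def using wfrec_fixpoint[OF wfR] by metis
qed

lemma step:
  assumes "\<And>k. (k,i) \<in> R \<Longrightarrow> E x k = E y k"
    and "\<And>k. (k,i) \<in> R \<Longrightarrow> bit (E x k) x = bit (E y k) y"
  shows "E x i = E y i"
proof -
  have 1: "E y i = F y (E x) i" using E_unfold F_cong assms(1) by metis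
  have 2: "(\<forall>j. (j,i) \<in> R \<longrightarrow> bit (E x j) z = bit (E x j) y) = (\<forall>j. (j,i) \<in> R \<longrightarrow> bit (E x j) z = bit (E x j) x)" for z
  proof -
    have "\<And>k. (k,i) \<in> R \<Longrightarrow> bit (E x k) y = bit (E x k) x" using assms by metis
    then show ?thesis by auto
  qed
  have "F y (E x) i = F x (E x) i" unfolding F_def 2 ..
  then show ?thesis using 1 E_unfold by metis
qed

lemma agree:
  assumes "\<And>k. (k,i) \<in> R \<Longrightarrow> bit (E x k) x = bit (E y k) y"
  shows "(j,i) \<in> R \<Longrightarrow> E x j = E y j"
proof (induction j rule: wf_induct_rule[OF wfR])
  case (1 j)
  show ?case
  proof (rule step)
    fix k assume "(k,j) \<in> R"
    then have "(k,i) \<in> R" using R_trans 1(2) by blast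
    then show "E x k = E y k" using 1(1) \<open>(k,j) \<in> R\<close> by blast
    show "bit (E x k) x = bit (E y k) y" using assms \<open>(k,i) \<in> R\<close> by blast
  qed
qed

lemma E_Inl:
  assumes "E x j = Inl q"
  shows "q \<in> pend (E x) j"
proof -
  have ne: "pend (E x) j \<noteq> {}"
  proof
    assume "pend (E x) j = {}"
    then have "E x j = Inr (SOME y. y \<in> X \<and> (\<forall>k. (k,j) \<in> R \<longrightarrow> bit (E x k) y = bit (E x k) x))"
      using E_unfold[of x j] unfolding F_def by simp
    then show False using assms by simp
  qed
  then have "E x j = Inl (SOME q. q \<in> pend (E x) j)" using E_unfold[of x j] unfolding F_def by simp
  then have qe: "q = (SOME q. q \<in> pend (E x) j)" using assms by simp
  from ne obtain q0 where "q0 \<in> pend (E x) j" by blast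
  then have "(SOME q. q \<in> pend (E x) j) \<in> pend (E x) j" by (rule someI)
  then show ?thesis using qe by simp
qed

lemma E_Inr:
  assumes "E x j = Inr r" and "x \<in> X"
  shows "pend (E x) j = {} \<and> r \<in> X \<and> (\<forall>k. (k,j) \<in> R \<longrightarrow> bit (E x k) r = bit (E x k) x)"
proof -
  have pe: "pend (E x) j = {}"
  proof (rule ccontr)
    assume "pend (E x) j \<noteq> {}"
    then have "E x j = Inl (SOME q. q \<in> pend (E x) j)" using E_unfold[of x j] unfolding F_def by simp
    then show False using assms(1) by simp
  qed
  then have "E x j = Inr (SOME y. y \<in> X \<and> (\<forall>k. (k,j) \<in> R \<longrightarrow> bit (E x k) y = bit (E x k) x))"
    using E_unfold[of x j] unfolding F_def by simp
  then have re: "r = (SOME y. y \<in> X \<and> (\<forall>k. (k,j) \<in> R \<longrightarrow> bit (E x k) y = bit (E x k) x))"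
    using assms(1) by simp
  have "x \<in> X \<and> (\<forall>k. (k,j) \<in> R \<longrightarrow> bit (E x k) x = bit (E x k) x)" using assms(2) by blast
  then have "r \<in> X \<and> (\<forall>k. (k,j) \<in> R \<longrightarrow> bit (E x k) r = bit (E x k) x)"
    unfolding re by (rule someI)
  then show ?thesis using pe by blast
qed

lemma q_unique:
  assumes "E x j = Inl q" "E x j' = Inl q" "j \<in> Field \<kappa>" "j' \<in> Field \<kappa>"
  shows "j = j'"
proof (rule ccontr)
  assume "j \<noteq> j'"
  then have "(j,j') \<in> R \<or> (j',j) \<in> R" using R_total assms by blast
  then show False
  proof
    assume "(j,j') \<in> R"
    then have "q \<in> placed (E x) j'" unfolding placed_def using assms by blast
    then show False using E_Inl[OF assms(2)] unfolding pend_def by blast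
  next
    assume "(j',j) \<in> R"
    then have "q \<in> placed (E x) j" unfolding placed_def using assms by blast
    then show False using E_Inl[OF assms(1)] unfolding pend_def by blast
  qed
qed

lemma under_small:
  assumes "b \<in> Field \<kappa>"
  shows "|{j. (j,b) \<in> \<kappa>}| <o \<kappa>"
proof -
  have "{j. (j,b) \<in> \<kappa>} \<subseteq> underS \<kappa> b \<union> {b}" unfolding underS_def by auto
  moreover have "|underS \<kappa> b \<union> {b}| <o \<kappa>"
  proof (rule card_of_Un_ordLess_infinite_Field[OF INF CO])
    show "|underS \<kappa> b| <o \<kappa>" using card_of_underS[OF CO assms] .
    show "|{b}| <o \<kappa>"
      using finite_ordLess_infinite[OF card_of_Well_order WO, of "{b}"] INF by (simp add: Field_card_of)
  qed
  ultimately show ?thesis using card_of_mono1 ordLeq_ordLess_trans by blast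
qed

lemma field_big: "\<not> |Field \<kappa>| <o \<kappa>"
  using card_of_Field_ordIso[OF CO] not_ordLess_ordIso by blast

lemma eventually_empty:
  assumes x: "x \<in> X" and b: "b \<in> Field \<kappa>"
  shows "\<exists>p. (b,p) \<in> R \<and> pend (E x) p = {}"
proof (rule ccontr)
  assume "\<not> ?thesis"
  then have ne: "\<And>p. (b,p) \<in> R \<Longrightarrow> pend (E x) p \<noteq> {}" by blast
  define Up where "Up = {p. (b,p) \<in> R}"
  define Ub where "Ub = {j. (j,b) \<in> \<kappa>}"
  define RB where "RB = {r. \<exists>j\<in>Ub. E x j = Inr r}"
  have RBX: "RB \<subseteq> X" unfolding RB_def using E_Inr x by blast
  have "RB \<subseteq> (\<lambda>j. projr (E x j)) ` Ub" unfolding RB_def by force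
  then have "|RB| \<le>o |Ub|" using card_of_mono1 card_of_image ordLeq_transitive by blast
  then have RBs: "|RB| <o \<kappa>" using under_small[OF b] Ub_def ordLeq_ordLess_trans by blast
  define TT where "TT = (\<Union>r\<in>RB. T r)"
  have Cinf: "Cinfinite \<kappa>" using CO INF cinfinite_def by blast
  have TTs: "|TT| <o \<kappa>" unfolding TT_def
    using card_of_UNION_ordLess_infinite_Field_regularCard[OF REG Cinf RBs] Tsmall RBX by blast
  have isl: "E x p = Inl (projl (E x p))" if "p \<in> Up" for p
  proof -
    have "pend (E x) p \<noteq> {}" using ne that unfolding Up_def by blast
    then have "E x p = Inl (SOME q. q \<in> pend (E x) p)" using E_unfold[of x p] unfolding F_def by simp
    then show ?thesis by simp
  qed
  have reps_sub: "reps (E x) p \<subseteq> RB" if "p \<in> Up" for p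
  proof
    fix r assume "r \<in> reps (E x) p"
    then obtain j where j: "(j,p) \<in> R" "E x j = Inr r" unfolding reps_def by blast
    have "j \<in> Ub"
    proof (rule ccontr)
      assume "j \<notin> Ub"
      moreover have "(b,b) \<in> \<kappa>" using reflK b by blast
      ultimately have "j \<noteq> b" unfolding Ub_def by blast
      moreover have "j \<in> Field \<kappa>" using R_field j(1) by blast
      ultimately have "j \<noteq> b" "j \<in> Field \<kappa>" by blast+
      then have "(j,b) \<in> R \<or> (b,j) \<in> R" using R_total b by blast
      moreover have "(j,b) \<notin> R" using \<open>j \<notin> Ub\<close> unfolding Ub_def R_def by blast
      ultimately have "(b,j) \<in> R" by blast
      then have "j \<in> Up" unfolding Up_def by blast
      then have "E x j = Inl (projl (E x j))" by (rule isl)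
      then show False using j(2) by simp
    qed
    then show "r \<in> RB" unfolding RB_def using j by blast
  qed
  have "projl (E x p) \<in> TT" if "p \<in> Up" for p
  proof -
    have "projl (E x p) \<in> pend (E x) p" by (rule E_Inl[OF isl[OF that]])
    then have "projl (E x p) \<in> (\<Union>r\<in>reps (E x) p. T r)" unfolding pend_def by blast
    then show ?thesis using reps_sub[OF that] unfolding TT_def by blast
  qed
  moreover have "inj_on (\<lambda>p. projl (E x p)) Up"
  proof (rule inj_onI)
    fix p p' assume "p \<in> Up" "p' \<in> Up" "projl (E x p) = projl (E x p')"
    have "E x p = Inl (projl (E x p))" using isl \<open>p \<in> Up\<close> by blast
    moreover have "E x p' = Inl (projl (E x p))"
      using isl[OF \<open>p' \<in> Up\<close>] unfolding \<open>projl (E x p) = projl (E x p')\<close>[symmetric] .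
    moreover have "p \<in> Field \<kappa>" "p' \<in> Field \<kappa>" using R_field \<open>p \<in> Up\<close> \<open>p' \<in> Up\<close> unfolding Up_def by blast+
    ultimately show "p = p'" by (rule q_unique)
  qed
  ultimately have "|Up| \<le>o |TT|" using card_of_ordLeq by blast
  then have Ups: "|Up| <o \<kappa>" using TTs ordLeq_ordLess_trans by blast
  have "Field \<kappa> \<subseteq> Ub \<union> Up"
  proof
    fix j assume jF: "j \<in> Field \<kappa>"
    show "j \<in> Ub \<union> Up"
    proof (cases "j = b")
      case True
      then show ?thesis using reflK b unfolding Ub_def by blast
    next
      case False
      then have "(j,b) \<in> R \<or> (b,j) \<in> R" using R_total b jF by blast
      then show ?thesis unfolding Ub_def Up_def R_def by blast
    qed
  qed
  moreover have "|Ub \<union> Up| <o \<kappa>"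
    using card_of_Un_ordLess_infinite_Field[OF INF CO] under_small[OF b] Ups Ub_def by blast
  ultimately show False using field_big card_of_mono1 ordLeq_ordLess_trans by blast
qed

lemma rep_above:
  assumes "x \<in> X" "b \<in> Field \<kappa>"
  shows "\<exists>p r. (b,p) \<in> R \<and> E x p = Inr r"
proof -
  obtain p where p: "(b,p) \<in> R" "pend (E x) p = {}" using eventually_empty[OF assms] by blast
  then show ?thesis using E_unfold[of x p] unfolding F_def by auto
qed

lemma task_placed:
  assumes "x \<in> X" "E x p = Inr r" "p \<in> Field \<kappa>" "q \<in> T r"
  shows "\<exists>j\<in>Field \<kappa>. E x j = Inl q"
proof -
  obtain p' where p': "(p,p') \<in> R" "pend (E x) p' = {}" using eventually_empty[OF assms(1,3)] by blast
  have "r \<in> reps (E x) p'" unfolding reps_def using p'(1) assms(2) by blast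
  then have "q \<in> placed (E x) p'" using p'(2) assms(4) unfolding pend_def by blast
  then show ?thesis unfolding placed_def using R_field by blast
qed

lemma hits:
  assumes x: "x \<in> X"
  shows "\<exists>p\<in>Field \<kappa>. E x p = Inr x"
proof -
  define Qx where "Qx = {j \<in> Field \<kappa>. \<exists>q\<in>T x. E x j = Inl q}"
  have "inj_on (\<lambda>j. projl (E x j)) Qx"
  proof (rule inj_onI)
    fix j j' assume "j \<in> Qx" "j' \<in> Qx" "projl (E x j) = projl (E x j')"
    then obtain q q' where "E x j = Inl q" "E x j' = Inl q'" "j \<in> Field \<kappa>" "j' \<in> Field \<kappa>"
      unfolding Qx_def by blast
    moreover have "q = q'" using calculation \<open>projl (E x j) = projl (E x j')\<close> by simp
    ultimately show "j = j'" using q_unique by blast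
  qed
  moreover have "(\<lambda>j. projl (E x j)) ` Qx \<subseteq> T x" unfolding Qx_def by auto
  ultimately have "|Qx| \<le>o |T x|" using card_of_ordLeq by blast
  then have Qs: "|Qx| <o \<kappa>" using Tsmall[OF x] ordLeq_ordLess_trans by blast
  have "\<not> cofinal Qx \<kappa>"
  proof
    assume "cofinal Qx \<kappa>"
    moreover have "Qx \<subseteq> Field \<kappa>" unfolding Qx_def by blast
    ultimately have "|Qx| =o \<kappa>" using REG unfolding regularCard_def by blast
    then show False using Qs not_ordLess_ordIso by blast
  qed
  then obtain b where b: "b \<in> Field \<kappa>" "\<And>j. j \<in> Qx \<Longrightarrow> b = j \<or> (b,j) \<notin> \<kappa>"
    unfolding cofinal_def by blast
  obtain p r where pr: "(b,p) \<in> R" "E x p = Inr r" using rep_above[OF x b(1)] by blast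
  have rr: "r \<in> X" "\<And>k. (k,p) \<in> R \<Longrightarrow> bit (E x k) r = bit (E x k) x"
    using E_Inr[OF pr(2) x] by auto
  have pF: "p \<in> Field \<kappa>" using R_field pr(1) by blast
  have "r = x"
  proof (rule ccontr)
    assume "r \<noteq> x"
    then obtain q where q: "q \<in> T r" "q \<in> T x" "h q x \<noteq> h q r" using SEP[OF x rr(1)] by blast
    obtain j where j: "j \<in> Field \<kappa>" "E x j = Inl q" using task_placed[OF x pr(2) pF q(1)] by blast
    have "j \<in> Qx" unfolding Qx_def using j q(2) by blast
    then have "b = j \<or> (b,j) \<notin> \<kappa>" using b(2) by blast
    then have "(j,b) \<in> \<kappa>"
    proof
      assume "b = j" then show ?thesis using reflK b(1) by blast
    next
      assume nbj: "(b,j) \<notin> \<kappa>"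
      then have "j \<noteq> b" using reflK b(1) by blast
      then have "(j,b) \<in> \<kappa> \<or> (b,j) \<in> \<kappa>" using totalK b(1) j(1) unfolding total_on_def by blast
      then show ?thesis using nbj by blast
    qed
    then have "(j,p) \<in> \<kappa>" using pr(1) transK unfolding R_def trans_def by blast
    moreover have "j \<noteq> p" using j(2) pr(2) by auto
    ultimately have "(j,p) \<in> R" unfolding R_def by blast
    then have "bit (E x j) r = bit (E x j) x" using rr(2) by blast
    then show False using q(3) j(2) unfolding bit_def by simp
  qed
  then show ?thesis using pr pF by blast
qed

lemma main: "|X| \<le>o |two_lt \<kappa>|"
proof -
  define P where "P x = (SOME p. p \<in> Field \<kappa> \<and> E x p = Inr x)" for x
  have P: "P x \<in> Field \<kappa> \<and> E x (P x) = Inr x" if "x \<in> X" for x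
  proof -
    have "\<exists>p. p \<in> Field \<kappa> \<and> E x p = Inr x" using hits[OF that] by blast
    then show ?thesis unfolding P_def by (rule someI_ex)
  qed
  define code where "code x = (P x, {j \<in> underS \<kappa> (P x). bit (E x j) x})" for x
  have "code ` X \<subseteq> two_lt \<kappa>"
  proof (rule image_subsetI)
    fix x assume "x \<in> X"
    then have "P x \<in> Field \<kappa>" using P by blast
    moreover have "{j \<in> underS \<kappa> (P x). bit (E x j) x} \<subseteq> underS \<kappa> (P x)" by blast
    ultimately show "code x \<in> two_lt \<kappa>" unfolding code_def two_lt_def by blast
  qed
  moreover have "inj_on code X"
  proof (rule inj_onI)
    fix x y assume xy: "x \<in> X" "y \<in> X" "code x = code y"
    have f1: "fst (code x) = fst (code y)" and f2: "snd (code x) = snd (code y)" using xy(3) by simp_all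
    have pe: "P x = P y" using f1 unfolding code_def fst_conv .
    have se: "{j \<in> underS \<kappa> (P x). bit (E x j) x} = {j \<in> underS \<kappa> (P y). bit (E y j) y}"
      using f2 unfolding code_def snd_conv .
    define p where "p = P x"
    have us: "underS \<kappa> p = {k. (k,p) \<in> R}" unfolding underS_def R_def by auto
    have se': "{j \<in> underS \<kappa> p. bit (E x j) x} = {j \<in> underS \<kappa> p. bit (E y j) y}"
      using se pe unfolding p_def by simp
    have bb: "bit (E x k) x = bit (E y k) y" if "(k,p) \<in> R" for k
    proof -
      have k: "k \<in> underS \<kappa> p" using that us by blast
      have "(k \<in> {j \<in> underS \<kappa> p. bit (E x j) x}) = (k \<in> {j \<in> underS \<kappa> p. bit (E y j) y})"
        using se' by simp
      then show ?thesis using k by simp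
    qed
    have ee: "E x k = E y k" if "(k,p) \<in> R" for k using agree[OF bb that] .
    have "E x p = E y p" using step[OF ee bb] .
    moreover have "E x p = Inr x" using P[OF xy(1)] p_def by simp
    moreover have "E y p = Inr y" using P[OF xy(2)] pe p_def by simp
    ultimately show "x = y" by simp
  qed
  ultimately show ?thesis using card_of_ordLeq by blast
qed

end

definition qs :: "('a::boolean_algebra \<Rightarrow> 'a set) \<Rightarrow> 'a \<Rightarrow> ('a \<times> bool) set" where
  "qs f r = {(m,b). m \<in> (f r \<union> f (- r)) \<union> uminus ` (f r \<union> f (- r))}"

definition hq :: "('a::boolean_algebra \<times> bool) \<Rightarrow> 'a \<Rightarrow> bool" where
  "hq q z = (if snd q then fst q \<le> z else z \<le> fst q)"

lemma qs_small:
  fixes \<kappa> :: "'k rel" and f :: "'a::boolean_algebra \<Rightarrow> 'a set"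
  assumes CO: "Card_order \<kappa>" and INF: "\<not> finite (Field \<kappa>)"
    and fs: "\<And>a. |f a| <o \<kappa>"
  shows "|qs f r| <o \<kappa>"
proof -
  define S where "S = (f r \<union> f (- r)) \<union> uminus ` (f r \<union> f (- r))"
  have S1: "|f r \<union> f (- r)| <o \<kappa>" using card_of_Un_ordLess_infinite_Field[OF INF CO fs fs] .
  have S: "|S| <o \<kappa>" unfolding S_def
    using card_of_Un_ordLess_infinite_Field[OF INF CO S1] card_of_image ordLeq_ordLess_trans S1 by blast
  have "qs f r = (\<lambda>m. (m,True)) ` S \<union> (\<lambda>m. (m,False)) ` S"
    unfolding qs_def S_def by auto
  moreover have "|(\<lambda>m. (m,True)) ` S| <o \<kappa>" "|(\<lambda>m. (m,False)) ` S| <o \<kappa>"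
    using card_of_image ordLeq_ordLess_trans S by blast+
  ultimately show ?thesis using card_of_Un_ordLess_infinite_Field[OF INF CO] by metis
qed

theorem corollary4p4:
  fixes \<kappa> :: "'k rel"
  assumes "Card_order \<kappa>" and "\<not> finite (Field \<kappa>)" and "regularCard \<kappa>"
    and "FN_property \<kappa> TYPE('a::boolean_algebra)"
  shows "(\<forall>A :: 'a set. pairwise_disjoint_nonzero A \<longrightarrow> (card_of A, card_of (two_lt \<kappa>)) \<in> ordLeq)
       \<and> (\<forall>C :: 'a set. is_chain C \<longrightarrow> (card_of C, card_of (two_lt \<kappa>)) \<in> ordLeq)"
proof -
  obtain f :: "'a \<Rightarrow> 'a set" where fs: "\<And>a. |f a| <o \<kappa>"
    and fn: "\<And>a b. a \<le> b \<Longrightarrow> \<exists>c\<in>f a \<inter> f b. a \<le> c \<and> c \<le> b"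
    using assms(4) unfolding FN_property_def by blast
  have Ts: "|qs f r| <o \<kappa>" for r by (rule qs_small[OF assms(1,2)]) (rule fs)
  have P1: "|A| \<le>o |two_lt \<kappa>|" if A: "pairwise_disjoint_nonzero A" for A :: "'a set"
  proof -
    interpret tsetup \<kappa> A "qs f" hq
    proof (unfold_locales)
      show "Card_order \<kappa>" "infinite (Field \<kappa>)" "regularCard \<kappa>" using assms by auto
      show "\<And>r. r \<in> A \<Longrightarrow> |qs f r| <o \<kappa>" using Ts by blast
      fix x r assume xr: "x \<in> A" "r \<in> A" "x \<noteq> r"
      have rnz: "r \<noteq> bot" and dis: "inf r x = bot" using A xr unfolding pairwise_disjoint_nonzero_def by auto
      have "r \<le> - x" using dis by (simp add: inf_shunt)
      then obtain c where c: "c \<in> f r" "c \<in> f (- x)" "r \<le> c" "c \<le> - x" using fn[of r "- x"] by blast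
      let ?q = "(- c, False)"
      have "?q \<in> qs f r" "?q \<in> qs f x" unfolding qs_def using c by auto
      moreover have "hq ?q x" unfolding hq_def using c(4) by (simp add: compl_le_swap1)
      moreover have "\<not> hq ?q r"
      proof
        assume "hq ?q r"
        then have "r \<le> - c" unfolding hq_def by simp
        then have "r \<le> inf c (- c)" by (rule le_infI[OF c(3)])
        then show False using rnz by (simp add: bot_unique)
      qed
      ultimately show "\<exists>q\<in>qs f r \<inter> qs f x. hq q x \<noteq> hq q r" by blast
    qed
    show ?thesis using main .
  qed
  have P2: "|C| \<le>o |two_lt \<kappa>|" if C: "is_chain C" for C :: "'a set"
  proof -
    interpret tsetup \<kappa> C "qs f" hq
    proof (unfold_locales)
      show "Card_order \<kappa>" "infinite (Field \<kappa>)" "regularCard \<kappa>" using assms by auto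
      show "\<And>r. r \<in> C \<Longrightarrow> |qs f r| <o \<kappa>" using Ts by blast
      fix x r assume xr: "x \<in> C" "r \<in> C" "x \<noteq> r"
      have qin: "(c, b) \<in> qs f r \<inter> qs f x" if "c \<in> f r" "c \<in> f x" for c b
        unfolding qs_def using that by auto
      have "x \<le> r \<or> r \<le> x" using C xr unfolding is_chain_def by blast
      then show "\<exists>q\<in>qs f r \<inter> qs f x. hq q x \<noteq> hq q r"
      proof
        assume xr': "x \<le> r"
        obtain c where c: "c \<in> f x" "c \<in> f r" "x \<le> c" "c \<le> r" using fn[OF xr'] by blast
        show ?thesis
        proof (cases "c = r")
          case True
          have "\<not> r \<le> x" using xr' xr(3) by (metis order.antisym)
          then have "hq (c,True) x \<noteq> hq (c,True) r" unfolding hq_def using True by simp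
          then show ?thesis using qin c by blast
        next
          case False
          have "\<not> r \<le> c" using c(4) False by (metis order.antisym)
          then have "hq (c,False) x \<noteq> hq (c,False) r" unfolding hq_def using c(3) by simp
          then show ?thesis using qin c by blast
        qed
      next
        assume rx: "r \<le> x"
        obtain c where c: "c \<in> f r" "c \<in> f x" "r \<le> c" "c \<le> x" using fn[OF rx] by blast
        show ?thesis
        proof (cases "c = x")
          case True
          have "\<not> x \<le> r" using rx xr(3) by (metis order.antisym)
          then have "hq (c,True) x \<noteq> hq (c,True) r" unfolding hq_def using True by simp
          then show ?thesis using qin c by blast
        next
          case False
          have "\<not> x \<le> c" using c(4) False by (metis order.antisym)
          then have "hq (c,False) x \<noteq> hq (c,False) r" unfolding hq_def using c(3) by simp
          then show ?thesis using qin c by blast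
        qed
      qed
    qed
    show ?thesis using main .
  qed
  show ?thesis using P1 P2 by blast
qed

end
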